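(* Let $p>3$ and $\sigma_c=\frac12-\frac1{p-1}$. Let $T_*>0$, let $\lambda:[0,T_* )\to(0,\infty)$ and $\tau:[0,T_* )\to\mathbb{R}$ be functions, and let $\eta:\mathbb{R}\to\mathbb{C}$. Then the function $$\psi(x,t)=\lambda(t)^{1/(p-1)}e^{i\tau(t)}\eta(\lambda(t)x)$$ solves the equation $i\partial_t\psi+\partial_x^2\psi+\delta|\psi|^{p-1}\psi=0$ on $[0,T_* )$ with $\lim_{t\nearrow T_*}\lambda(t)=+\infty$ if and only if there exist $h>0$ and $\kappa\in\mathbb{R}$ such that $$\lambda(t)=\frac{1}{\sqrt{2h(T_*-t)}},\qquad \tau(t)=\frac{\kappa}{2h}\ln\Big(\frac{T_*}{T_*-t}\Big)+\tau(0),$$ and $\eta$ solves the stationary equation $$(\kappa+ih\sigma_c)\eta-ih\Lambda_z\eta-\eta_{zz}-\delta|\eta|^{p-1}\eta=0,\qquad \Lambda_z=\tfrac12+z\partial_z .$$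
   Context: Here $\delta=\delta(x)$ is the Dirac delta at the origin. The equation $i\partial_t\psi+\partial_x^2\psi+\delta|\psi|^{p-1}\psi=0$ (for a complex-valued $\psi(x,t)$, $x\in\mathbb{R}$) means: $i\partial_t\psi+\partial_x^2\psi=0$ for $x\neq0$, together with the jump conditions at $x=0$: $\psi(0-,t)=\psi(0+,t)=:\psi(0,t)$ and $\partial_x\psi(0+,t)-\partial_x\psi(0-,t)=-|\psi(0,t)|^{p-1}\psi(0,t)$, where $f(0\pm)$ denote one-sided limits. Similarly, the stationary equation $(\kappa+ih\sigma)\eta-ih\Lambda_z\eta-\eta_{zz}-\delta|\eta|^{p-1}\eta=0$ means that the equation without the $\delta$ term holds for $z\neq0$, $\eta$ is continuous at $0$, and $\eta_z(0+)-\eta_z(0-)=-|\eta(0)|^{p-1}\eta(0)$. *)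

theory Defs
  imports "HOL-Analysis.Analysis"
begin

definition sigma_c :: "real \<Rightarrow> real" where
  "sigma_c p = 1/2 - 1/(p - 1)"

definition dx :: "(real \<Rightarrow> real \<Rightarrow> complex) \<Rightarrow> real \<Rightarrow> real \<Rightarrow> complex" where
  "dx \<psi> t x = vector_derivative (\<lambda>y. \<psi> y t) (at x)"

definition dxx :: "(real \<Rightarrow> real \<Rightarrow> complex) \<Rightarrow> real \<Rightarrow> real \<Rightarrow> complex" where
  "dxx \<psi> t x = vector_derivative (\<lambda>y. dx \<psi> t y) (at x)"

definition dt :: "real \<Rightarrow> (real \<Rightarrow> real \<Rightarrow> complex) \<Rightarrow> real \<Rightarrow> real \<Rightarrow> complex" where
  "dt T \<psi> x t = vector_derivative (\<lambda>s. \<psi> x s) (at t within {0..<T})"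

text \<open>psi solves  i psi_t + psi_xx + delta |psi|^(p-1) psi = 0  on [0,T):
  the free equation holds for x \<noteq> 0, psi(.,t) is continuous at 0 (its value at 0
  being the common one-sided limit), and the derivative jump condition holds.\<close>
definition solves_dNLS :: "real \<Rightarrow> real \<Rightarrow> (real \<Rightarrow> real \<Rightarrow> complex) \<Rightarrow> bool" where
  "solves_dNLS p T \<psi> \<longleftrightarrow>
    (\<forall>t \<in> {0..<T}.
       (\<forall>x. x \<noteq> 0 \<longrightarrow>
          (\<lambda>y. \<psi> y t) differentiable (at x) \<and>
          (\<lambda>y. dx \<psi> t y) differentiable (at x) \<and>
          (\<lambda>s. \<psi> x s) differentiable (at t within {0..<T}) \<and>
          \<i> * dt T \<psi> x t + dxx \<psi> t x = 0) \<and>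
       ((\<lambda>y. \<psi> y t) \<longlongrightarrow> \<psi> 0 t) (at 0) \<and>
       (\<exists>l r. ((\<lambda>y. dx \<psi> t y) \<longlongrightarrow> r) (at_right 0) \<and>
              ((\<lambda>y. dx \<psi> t y) \<longlongrightarrow> l) (at_left 0) \<and>
              r - l = - (complex_of_real (cmod (\<psi> 0 t) powr (p - 1)) * \<psi> 0 t)))"

definition solves_stationary :: "real \<Rightarrow> real \<Rightarrow> real \<Rightarrow> (real \<Rightarrow> complex) \<Rightarrow> bool" where
  "solves_stationary p \<kappa> h \<eta> \<longleftrightarrow>
    (\<forall>z. z \<noteq> 0 \<longrightarrow>
       \<eta> differentiable (at z) \<and>
       (\<lambda>y. vector_derivative \<eta> (at y)) differentiable (at z) \<and>
       (complex_of_real \<kappa> + \<i> * complex_of_real (h * sigma_c p)) * \<eta> z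
         - \<i> * complex_of_real h * (\<eta> z / 2 + complex_of_real z * vector_derivative \<eta> (at z))
         - vector_derivative (\<lambda>y. vector_derivative \<eta> (at y)) (at z) = 0) \<and>
    (\<eta> \<longlongrightarrow> \<eta> 0) (at 0) \<and>
    (\<exists>l r. ((\<lambda>y. vector_derivative \<eta> (at y)) \<longlongrightarrow> r) (at_right 0) \<and>
           ((\<lambda>y. vector_derivative \<eta> (at y)) \<longlongrightarrow> l) (at_left 0) \<and>
           r - l = - (complex_of_real (cmod (\<eta> 0) powr (p - 1)) * \<eta> 0))"

end

theory Submission
  imports Defs
begin


lemma filtermap_scale_at_right: "(c::real) > 0 \<Longrightarrow> filtermap (\<lambda>y. c*y) (at_right 0) = at_right 0"
  using filtermap_times_pos_at_right[of c 0] by simp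

lemma filtermap_scale_at_left: assumes "(c::real) > 0" shows "filtermap (\<lambda>y. c*y) (at_left 0) = at_left 0"
proof (rule filtermap_fun_inverse[where g="\<lambda>x. inverse c * x"])
  show "filterlim (\<lambda>x. inverse c * x) (at_left 0) (at_left 0)"
    using assms by (auto simp: filterlim_at eventually_at_filter intro!: tendsto_eq_intros filterlim_ident simp: mult_pos_neg field_simps)
  show "filterlim (\<lambda>x. c * x) (at_left 0) (at_left 0)"
    using assms by (auto simp: filterlim_at eventually_at_filter intro!: tendsto_eq_intros simp: mult_pos_neg)
  show "\<forall>\<^sub>F x in at_left 0. c * (inverse c * x) = x" using assms by simp
qed

lemma filtermap_scale_at: assumes "(c::real) \<noteq> 0" shows "filtermap (\<lambda>y. c*y) (at 0) = at 0"
proof (rule filtermap_fun_inverse[where g="\<lambda>x. inverse c * x"])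
  show "filterlim (\<lambda>x. inverse c * x) (at 0) (at 0)"
    using assms by (auto simp: filterlim_at eventually_at_filter intro!: tendsto_eq_intros)
  show "filterlim (\<lambda>x. c * x) (at 0) (at 0)"
    using assms by (auto simp: filterlim_at eventually_at_filter intro!: tendsto_eq_intros)
  show "\<forall>\<^sub>F x in at 0. c * (inverse c * x) = x" using assms by simp
qed

lemma tendsto_scale_iff:
  assumes "(c::real) > 0" "F = at_right 0 \<or> F = at_left 0 \<or> F = at 0"
  shows "((\<lambda>y. f (c*y)) \<longlongrightarrow> l) F \<longleftrightarrow> (f \<longlongrightarrow> l) F"
proof -
  have "filtermap (\<lambda>y. c*y) F = F" using assms filtermap_scale_at_right filtermap_scale_at_left filtermap_scale_at by auto
  then show ?thesis using tendsto_compose_filtermap[of f "\<lambda>y. c*y" l F] by (simp add: o_def)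
qed

lemma scale_hvd:
  assumes "(g has_vector_derivative g') (at (L*x))"
  shows "((\<lambda>y. c * g (L*y)) has_vector_derivative (c * (complex_of_real L * g'))) (at x)"
proof -
  have "((\<lambda>y. L*y) has_vector_derivative L) (at x)"
    by (auto intro!: derivative_eq_intros)
  from vector_diff_chain_at[OF this] assms
  have "((\<lambda>y. g (L*y)) has_vector_derivative (L *\<^sub>R g')) (at x)" by (simp add: o_def)
  then have "((\<lambda>y. c * g (L*y)) has_vector_derivative (c * (L *\<^sub>R g') + 0 * g (L*x))) (at x)"
    by (intro has_vector_derivative_mult) (auto intro!: derivative_eq_intros)
  then show ?thesis by (simp add: scaleR_conv_of_real)
qed

lemma scale_diff_iff:
  fixes g :: "real \<Rightarrow> complex"
  assumes "c \<noteq> 0" "L \<noteq> 0"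
  shows "(\<lambda>y. c * g (L*y)) differentiable (at x) \<longleftrightarrow> g differentiable (at (L*x))"
proof
  assume "g differentiable (at (L*x))"
  then show "(\<lambda>y. c * g (L*y)) differentiable (at x)"
    using scale_hvd vector_derivative_works differentiableI_vector by metis
next
  assume "(\<lambda>y. c * g (L*y)) differentiable (at x)"
  then obtain D where "((\<lambda>y. c * g (L*y)) has_vector_derivative D) (at ((1/L)*(L*x)))"
    using assms by (auto simp: vector_derivative_works)
  from scale_hvd[OF this, of "1/c"]
  have "((\<lambda>y. 1/c * (c * g (L*((1/L)*y)))) has_vector_derivative (1/c * (complex_of_real (1/L) * D))) (at (L*x))" .
  then have "(g has_vector_derivative (1/c * (complex_of_real (1/L) * D))) (at (L*x))" using assms by simp
  then show "g differentiable (at (L*x))" by (rule differentiableI_vector)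
qed

lemma scale_vd:
  assumes "g differentiable (at (L*x))"
  shows "vector_derivative (\<lambda>y. c * g (L*y)) (at x) = c * (complex_of_real L * vector_derivative g (at (L*x)))"
  using assms scale_hvd vector_derivative_at vector_derivative_works by metis

lemma vd_cong_open:
  assumes "open S" "x \<in> S" "\<And>y. y \<in> S \<Longrightarrow> f y = g y"
  shows "(f differentiable (at x) \<longleftrightarrow> g differentiable (at x)) \<and>
         vector_derivative f (at x) = vector_derivative g (at x)"
proof -
  have *: "(f has_vector_derivative D) (at x) \<longleftrightarrow> (g has_vector_derivative D) (at x)" for D
    using has_vector_derivative_transform_within_open[OF _ assms(1,2), of f D g]
      has_vector_derivative_transform_within_open[OF _ assms(1,2), of g D f] assms(3) by metis
  have d: "f differentiable (at x) \<longleftrightarrow> g differentiable (at x)"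
    using * vector_derivative_works differentiableI_vector by metis
  show ?thesis
  proof (cases "f differentiable (at x)")
    case True
    then show ?thesis using d * vector_derivative_works vector_derivative_at by metis
  next
    case False
    then have "\<not> (\<exists>D. (f has_vector_derivative D) (at x))" "\<not> (\<exists>D. (g has_vector_derivative D) (at x))"
      using d differentiableI_vector by blast+
    then show ?thesis using d unfolding vector_derivative_def by simp
  qed
qed

lemma tendsto_cmult_iff:
  fixes k :: complex
  assumes "k \<noteq> 0"
  shows "((\<lambda>y. k * f y) \<longlongrightarrow> r) F \<longleftrightarrow> (f \<longlongrightarrow> r / k) F"
proof
  assume "((\<lambda>y. k * f y) \<longlongrightarrow> r) F"
  from tendsto_mult_left[OF this, of "1/k"] show "(f \<longlongrightarrow> r / k) F" using assms by simp
next
  assume "(f \<longlongrightarrow> r / k) F"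
  from tendsto_mult_left[OF this, of k] show "((\<lambda>y. k * f y) \<longlongrightarrow> r) F" using assms by simp
qed

lemma spatial_D:
  fixes L x :: real and \<eta> :: "real \<Rightarrow> complex"
  assumes eq: "\<And>y. \<psi> y t = c * \<eta> (L*y)" and "c \<noteq> 0" "L > 0"
    and d: "(\<lambda>y. \<psi> y t) differentiable (at x)"
  shows "\<eta> differentiable (at (L*x))"
proof -
  have "(\<lambda>y. \<psi> y t) = (\<lambda>y. c * \<eta> (L*y))" using eq by auto
  moreover have "L \<noteq> 0" using \<open>L > 0\<close> by simp
  ultimately show ?thesis using d scale_diff_iff[OF \<open>c \<noteq> 0\<close> \<open>L \<noteq> 0\<close>, of \<eta> x] by simp
qed

lemma spatial:
  fixes L :: real and \<eta> :: "real \<Rightarrow> complex"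
  assumes eq: "\<And>y. \<psi> y t = c * \<eta> (L*y)" and c: "c \<noteq> 0" and L: "L > 0"
    and D: "\<And>z. z \<noteq> 0 \<Longrightarrow> \<eta> differentiable (at z)"
  shows "\<And>x. (\<lambda>y. \<psi> y t) differentiable (at x) \<longleftrightarrow> \<eta> differentiable (at (L*x))"
    and "\<And>x. x \<noteq> 0 \<Longrightarrow> dx \<psi> t x = c * (complex_of_real L * vector_derivative \<eta> (at (L*x)))"
    and "\<And>x. x \<noteq> 0 \<Longrightarrow> ((\<lambda>y. dx \<psi> t y) differentiable (at x) \<longleftrightarrow>
                  (\<lambda>z. vector_derivative \<eta> (at z)) differentiable (at (L*x)))"
    and "\<And>x. x \<noteq> 0 \<Longrightarrow> (\<lambda>z. vector_derivative \<eta> (at z)) differentiable (at (L*x)) \<Longrightarrow>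
          dxx \<psi> t x = c * (complex_of_real L * (complex_of_real L *
             vector_derivative (\<lambda>z. vector_derivative \<eta> (at z)) (at (L*x))))"
    and "((\<lambda>y. dx \<psi> t y) \<longlongrightarrow> r) (at_right 0) \<longleftrightarrow>
         ((\<lambda>z. vector_derivative \<eta> (at z)) \<longlongrightarrow> r / (c * complex_of_real L)) (at_right 0)"
    and "((\<lambda>y. dx \<psi> t y) \<longlongrightarrow> r) (at_left 0) \<longleftrightarrow>
         ((\<lambda>z. vector_derivative \<eta> (at z)) \<longlongrightarrow> r / (c * complex_of_real L)) (at_left 0)"
    and "((\<lambda>y. \<psi> y t) \<longlongrightarrow> \<psi> 0 t) (at 0) \<longleftrightarrow> (\<eta> \<longlongrightarrow> \<eta> 0) (at 0)"
proof -
  have pe: "(\<lambda>y. \<psi> y t) = (\<lambda>y. c * \<eta> (L*y))" using eq by auto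
  show "(\<lambda>y. \<psi> y t) differentiable (at x) \<longleftrightarrow> \<eta> differentiable (at (L*x))" for x
    unfolding pe using scale_diff_iff c L by auto
  have dxe: "dx \<psi> t x = c * (complex_of_real L * vector_derivative \<eta> (at (L*x)))" if "x \<noteq> 0" for x
    unfolding dx_def pe using scale_vd D that L by simp
  then show "\<And>x. x \<noteq> 0 \<Longrightarrow> dx \<psi> t x = c * (complex_of_real L * vector_derivative \<eta> (at (L*x)))" .
  let ?g = "\<lambda>y. (c * complex_of_real L) * vector_derivative \<eta> (at (L*y))"
  have cong: "((\<lambda>y. dx \<psi> t y) differentiable (at x) \<longleftrightarrow> ?g differentiable (at x)) \<and>
       vector_derivative (\<lambda>y. dx \<psi> t y) (at x) = vector_derivative ?g (at x)" if "x \<noteq> 0" for x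
    by (rule vd_cong_open[of "{y. y \<noteq> 0}"]) (use that dxe in \<open>auto simp: open_Collect_neq\<close>)
  have cL: "c * complex_of_real L \<noteq> 0" using c L by simp
  show "(\<lambda>y. dx \<psi> t y) differentiable (at x) \<longleftrightarrow>
                  (\<lambda>z. vector_derivative \<eta> (at z)) differentiable (at (L*x))" if "x \<noteq> 0" for x
    using cong[OF that] scale_diff_iff[OF cL, of L "\<lambda>z. vector_derivative \<eta> (at z)"] L by auto
  show "dxx \<psi> t x = c * (complex_of_real L * (complex_of_real L *
             vector_derivative (\<lambda>z. vector_derivative \<eta> (at z)) (at (L*x))))"
    if "x \<noteq> 0" "(\<lambda>z. vector_derivative \<eta> (at z)) differentiable (at (L*x))" for x
    unfolding dxx_def using cong[OF that(1)] scale_vd[OF that(2), of "c * complex_of_real L"]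
    by (simp add: algebra_simps)
  have ev: "eventually (\<lambda>y. dx \<psi> t y = ?g y) (at_right 0)" "eventually (\<lambda>y. dx \<psi> t y = ?g y) (at_left 0)"
    using dxe by (auto simp: eventually_at_filter)
  show "((\<lambda>y. dx \<psi> t y) \<longlongrightarrow> r) (at_right 0) \<longleftrightarrow>
         ((\<lambda>z. vector_derivative \<eta> (at z)) \<longlongrightarrow> r / (c * complex_of_real L)) (at_right 0)"
    unfolding tendsto_cong[OF ev(1)] tendsto_cmult_iff[OF cL]
    using tendsto_scale_iff[OF L, of "at_right 0" "\<lambda>z. vector_derivative \<eta> (at z)"] by simp
  show "((\<lambda>y. dx \<psi> t y) \<longlongrightarrow> r) (at_left 0) \<longleftrightarrow>
         ((\<lambda>z. vector_derivative \<eta> (at z)) \<longlongrightarrow> r / (c * complex_of_real L)) (at_left 0)"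
    unfolding tendsto_cong[OF ev(2)] tendsto_cmult_iff[OF cL]
    using tendsto_scale_iff[OF L, of "at_left 0" "\<lambda>z. vector_derivative \<eta> (at z)"] by simp
  show "((\<lambda>y. \<psi> y t) \<longlongrightarrow> \<psi> 0 t) (at 0) \<longleftrightarrow> (\<eta> \<longlongrightarrow> \<eta> 0) (at 0)"
    unfolding pe using tendsto_cmult_iff[OF c, of "\<lambda>y. \<eta> (L*y)" "c * \<eta> 0" "at 0"]
      tendsto_scale_iff[OF L, of "at 0" \<eta>] eq[of 0] c by simp
qed

lemma time_hvd:
  fixes lam tau :: "real \<Rightarrow> real" and \<eta> :: "real \<Rightarrow> complex" and S :: "real set"
  assumes lpos: "lam t > 0"
    and dl: "(lam has_real_derivative l') (at t within S)"
    and dtau: "(tau has_real_derivative \<tau>') (at t within S)"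
    and de: "\<eta> differentiable (at (lam t * x))"
  shows "((\<lambda>s. complex_of_real (lam s powr a) * exp (\<i> * complex_of_real (tau s)) * \<eta> (lam s * x))
      has_vector_derivative
      (complex_of_real (lam t powr a) * exp (\<i> * complex_of_real (tau t)) *
        ((complex_of_real (a * l' / lam t) + \<i> * complex_of_real \<tau>') * \<eta> (lam t * x)
          + complex_of_real (l' * x) * vector_derivative \<eta> (at (lam t * x))))) (at t within S)"
proof -
  have p1: "((\<lambda>s. lam s powr a) has_real_derivative (a * lam t powr (a - 1) * l')) (at t within S)"
    using DERIV_chain2[OF has_real_derivative_powr[OF lpos] dl] by simp
  have p2: "((\<lambda>s. complex_of_real (lam s powr a)) has_vector_derivative
              complex_of_real (a * lam t powr (a - 1) * l')) (at t within S)"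
    using has_vector_derivative_of_real[OF p1] .
  have q0: "((\<lambda>s. \<i> * complex_of_real (tau s)) has_vector_derivative \<i> * complex_of_real \<tau>') (at t within S)"
    using has_vector_derivative_mult[OF has_vector_derivative_const has_vector_derivative_of_real[OF dtau], of \<i>]
    by simp
  have q1: "((\<lambda>s. exp (\<i> * complex_of_real (tau s))) has_vector_derivative
         (\<i> * complex_of_real \<tau>') * exp (\<i> * complex_of_real (tau t))) (at t within S)"
    using field_vector_diff_chain_within[OF q0, of exp "exp (\<i> * complex_of_real (tau t))"]
    by (simp add: o_def DERIV_exp has_field_derivative_at_within)
  have r0: "((\<lambda>s. lam s * x) has_vector_derivative l' * x) (at t within S)"
    using dl by (auto intro!: derivative_eq_intros simp: has_real_derivative_iff_has_vector_derivative[symmetric])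
  have r1: "((\<lambda>s. \<eta> (lam s * x)) has_vector_derivative (l' * x) *\<^sub>R vector_derivative \<eta> (at (lam t * x))) (at t within S)"
    using vector_diff_chain_within[OF r0, of \<eta>] de
    by (simp add: o_def vector_derivative_works has_vector_derivative_at_within)
  note all = has_vector_derivative_mult[OF has_vector_derivative_mult[OF p2 q1] r1]
  show ?thesis
    apply (rule has_vector_derivative_eq_rhs[OF all])
    using lpos
    by (simp add: scaleR_conv_of_real powr_diff algebra_simps divide_simps)
qed

lemma at_within_Ico_nontriv:
  fixes t T :: real
  assumes "0 \<le> t" "t < T"
  shows "at t within {0..<T} \<noteq> bot"
proof -
  have "t islimpt {0..<T}" using assms by simp
  then show ?thesis by (simp add: trivial_limit_within)
qed

definition ode_expr :: "(real \<Rightarrow> complex) \<Rightarrow> real \<Rightarrow> real \<Rightarrow> real \<Rightarrow> real \<Rightarrow> complex" where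
  "ode_expr \<eta> a b q y = vector_derivative (\<lambda>z. vector_derivative \<eta> (at z)) (at y)
     + \<i> * complex_of_real a * (complex_of_real q * \<eta> y + complex_of_real y * vector_derivative \<eta> (at y))
     - complex_of_real b * \<eta> y"

lemma pde_point:
  fixes lam tau :: "real \<Rightarrow> real" and \<eta> :: "real \<Rightarrow> complex"
  assumes psi: "\<And>x s. \<psi> x s = complex_of_real (lam s powr q) * exp (\<i> * complex_of_real (tau s)) * \<eta> (lam s * x)"
    and t: "0 \<le> t" "t < T" and lpos: "lam t > 0"
    and dl: "(lam has_real_derivative l') (at t within {0..<T})"
    and dtau: "(tau has_real_derivative \<tau>') (at t within {0..<T})"
    and x: "x \<noteq> 0"
    and D: "\<And>z. z \<noteq> 0 \<Longrightarrow> \<eta> differentiable (at z)"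
    and D2: "(\<lambda>z. vector_derivative \<eta> (at z)) differentiable (at (lam t * x))"
  shows "(\<lambda>s. \<psi> x s) differentiable (at t within {0..<T})"
    and "\<i> * dt T \<psi> x t + dxx \<psi> t x =
        (complex_of_real (lam t powr q) * exp (\<i> * complex_of_real (tau t)) * complex_of_real ((lam t)\<^sup>2))
        * ode_expr \<eta> (l' / lam t ^ 3) (\<tau>' / (lam t)\<^sup>2) q (lam t * x)"
proof -
  let ?A = "complex_of_real (lam t powr q) * exp (\<i> * complex_of_real (tau t))"
  let ?L = "lam t"
  have Lx: "?L * x \<noteq> 0" using lpos x by simp
  have pf: "(\<lambda>s. \<psi> x s) = (\<lambda>s. complex_of_real (lam s powr q) * exp (\<i> * complex_of_real (tau s)) * \<eta> (lam s * x))"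
    using psi by auto
  note hv = time_hvd[OF lpos dl dtau D[OF Lx], of q]
  show "(\<lambda>s. \<psi> x s) differentiable (at t within {0..<T})"
    unfolding pf using hv by (rule differentiableI_vector)
  have dtv: "dt T \<psi> x t = ?A * ((complex_of_real (q * l' / ?L) + \<i> * complex_of_real \<tau>') * \<eta> (?L * x)
          + complex_of_real (l' * x) * vector_derivative \<eta> (at (?L * x)))"
    unfolding dt_def pf by (rule vector_derivative_within[OF at_within_Ico_nontriv[OF t] hv])
  have A0: "?A \<noteq> 0" using lpos by simp
  have sp: "dxx \<psi> t x = ?A * (complex_of_real ?L * (complex_of_real ?L *
             vector_derivative (\<lambda>z. vector_derivative \<eta> (at z)) (at (?L*x))))"
    by (rule spatial(4)[OF _ A0 lpos D x D2]) (simp add: psi)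
  show "\<i> * dt T \<psi> x t + dxx \<psi> t x =
        (?A * complex_of_real ((lam t)\<^sup>2)) * ode_expr \<eta> (l' / lam t ^ 3) (\<tau>' / (lam t)\<^sup>2) q (lam t * x)"
    unfolding dtv sp ode_expr_def using lpos
    by (simp add: algebra_simps power2_eq_square power3_eq_cube divide_simps)
qed

lemma ode_unique:
  fixes \<eta> :: "real \<Rightarrow> complex"
  assumes q: "q > 0"
    and E1: "\<And>y. y \<noteq> 0 \<Longrightarrow> ode_expr \<eta> a1 b1 q y = 0"
    and E2: "\<And>y. y \<noteq> 0 \<Longrightarrow> ode_expr \<eta> a2 b2 q y = 0"
    and D: "\<And>z. z \<noteq> 0 \<Longrightarrow> \<eta> differentiable (at z)"
    and D2: "\<And>z. z \<noteq> 0 \<Longrightarrow> (\<lambda>z. vector_derivative \<eta> (at z)) differentiable (at z)"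
    and y0: "y0 \<noteq> 0" "\<eta> y0 \<noteq> 0"
  shows "a1 = a2 \<and> b1 = b2"
proof -
  define e1 where "e1 = (\<lambda>z. vector_derivative \<eta> (at z))"
  define e2 where "e2 = (\<lambda>z. vector_derivative e1 (at z))"
  have E1': "e2 y + \<i> * complex_of_real a1 * (complex_of_real q * \<eta> y + complex_of_real y * e1 y)
     - complex_of_real b1 * \<eta> y = 0" if "y \<noteq> 0" for y
    using E1[OF that] unfolding ode_expr_def e1_def e2_def .
  have E2': "e2 y + \<i> * complex_of_real a2 * (complex_of_real q * \<eta> y + complex_of_real y * e1 y)
     - complex_of_real b2 * \<eta> y = 0" if "y \<noteq> 0" for y
    using E2[OF that] unfolding ode_expr_def e1_def e2_def .
  have sub: "\<i> * complex_of_real (a1 - a2) * (complex_of_real q * \<eta> y + complex_of_real y * e1 y)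
     = complex_of_real (b1 - b2) * \<eta> y" if "y \<noteq> 0" for y
  proof -
    have "\<i> * complex_of_real (a1 - a2) * (complex_of_real q * \<eta> y + complex_of_real y * e1 y)
     - complex_of_real (b1 - b2) * \<eta> y =
      (e2 y + \<i> * complex_of_real a1 * (complex_of_real q * \<eta> y + complex_of_real y * e1 y)
     - complex_of_real b1 * \<eta> y) - (e2 y + \<i> * complex_of_real a2 * (complex_of_real q * \<eta> y + complex_of_real y * e1 y)
     - complex_of_real b2 * \<eta> y)" by (simp add: algebra_simps)
    also have "\<dots> = 0" using E1'[OF that] E2'[OF that] by simp
    finally show ?thesis by simp
  qed
  have cont: "isCont \<eta> y0"
    using D[OF y0(1)] by (simp add: differentiable_imp_continuous_within)
  have ev: "eventually (\<lambda>y. \<eta> y \<noteq> 0 \<and> y \<noteq> 0 \<and> y \<noteq> - y0 \<and> y \<noteq> y0) (at y0)"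
  proof -
    have "eventually (\<lambda>y. \<eta> y \<noteq> 0) (at y0)"
      using tendsto_imp_eventually_ne[OF cont[unfolded isCont_def] y0(2)] .
    moreover have "eventually (\<lambda>y. y \<noteq> 0) (at y0)"
      using tendsto_imp_eventually_ne[OF tendsto_ident_at y0(1)] .
    moreover have "eventually (\<lambda>y. y \<noteq> - y0) (at y0)"
      using tendsto_imp_eventually_ne[OF tendsto_ident_at, of y0 "- y0" UNIV] y0(1) by simp
    moreover have "eventually (\<lambda>y. y \<noteq> y0) (at y0)" by (simp add: eventually_at_filter)
    ultimately show ?thesis by eventually_elim auto
  qed
  then obtain y1 where y1: "\<eta> y1 \<noteq> 0" "y1 \<noteq> 0" "y1 \<noteq> - y0" "y1 \<noteq> y0"
    using eventually_happens[OF ev] by auto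
  have a: "a1 = a2"
  proof (rule ccontr)
    assume ne: "a1 \<noteq> a2"
    define c where "c = complex_of_real (b1 - b2) / (\<i> * complex_of_real (a1 - a2)) - complex_of_real q"
    have ne': "\<i> * complex_of_real (a1 - a2) \<noteq> 0" using ne by simp
    have ye1: "complex_of_real y * e1 y = c * \<eta> y" if "y \<noteq> 0" for y
    proof -
      have "complex_of_real q * \<eta> y + complex_of_real y * e1 y
          = complex_of_real (b1 - b2) * \<eta> y / (\<i> * complex_of_real (a1 - a2))"
        using sub[OF that] ne' by (simp add: eq_divide_eq mult.commute)
      then show ?thesis unfolding c_def using ne' by (simp add: field_simps)
    qed
    have deriv: "e1 y + complex_of_real y * e2 y - c * e1 y = 0" if "y \<noteq> 0" for y
    proof -
      have h1: "(\<eta> has_vector_derivative e1 y) (at y)" using D[OF that] by (simp add: e1_def vector_derivative_works)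
      have h2: "(e1 has_vector_derivative e2 y) (at y)" using D2[OF that] by (simp add: e1_def e2_def vector_derivative_works)
      have g: "((\<lambda>z. complex_of_real z * e1 z - c * \<eta> z) has_vector_derivative
            (complex_of_real y * e2 y + 1 * e1 y - (c * e1 y + 0 * \<eta> y))) (at y)"
        by (intro has_vector_derivative_diff has_vector_derivative_mult h1 h2 has_vector_derivative_const
              has_vector_derivative_of_real[OF DERIV_ident, simplified])
      have z: "((\<lambda>z. complex_of_real z * e1 z - c * \<eta> z) has_vector_derivative 0) (at y)"
        by (rule has_vector_derivative_transform_within_open[OF has_vector_derivative_const, where S="{z. z \<noteq> 0}"])
           (use that ye1 in \<open>auto simp: open_Collect_neq\<close>)
      show ?thesis using vector_derivative_unique_at[OF g z] by (simp add: algebra_simps)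
    qed
    have keyg: "(\<i> * complex_of_real a * (complex_of_real q + c) - complex_of_real b) * complex_of_real (y^2) + c * (c - 1) = 0"
      if "y \<noteq> 0" "\<eta> y \<noteq> 0"
        and EE: "\<And>y. y \<noteq> 0 \<Longrightarrow> e2 y + \<i> * complex_of_real a * (complex_of_real q * \<eta> y + complex_of_real y * e1 y)
     - complex_of_real b * \<eta> y = 0" for y a b
    proof -
      have e2y: "e2 y = - (\<i> * complex_of_real a * (complex_of_real q + c) - complex_of_real b) * \<eta> y"
        using EE[OF that(1)] ye1[OF that(1)] by (simp add: algebra_simps)
      have "complex_of_real y * e2 y = (e1 y + complex_of_real y * e2 y - c * e1 y) + (c - 1) * e1 y"
        by (simp add: algebra_simps)
      then have "complex_of_real y * e2 y = (c - 1) * e1 y" using deriv[OF that(1)] by simp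
      then have "complex_of_real y * (complex_of_real y * e2 y) = complex_of_real y * ((c - 1) * e1 y)"
        by simp
      also have "\<dots> = (c - 1) * (c * \<eta> y)" using ye1[OF that(1)] by (simp add: algebra_simps)
      finally have "complex_of_real y * (complex_of_real y * e2 y) = (c - 1) * (c * \<eta> y)" .
      then have "((\<i> * complex_of_real a * (complex_of_real q + c) - complex_of_real b) * complex_of_real (y^2) + c * (c - 1)) * \<eta> y = 0"
        unfolding e2y by (simp add: algebra_simps power2_eq_square)
      then show ?thesis using that(2) by simp
    qed
    note key = keyg[OF _ _ E1']
    note key2 = keyg[OF _ _ E2']
    have sq: "y1^2 \<noteq> y0^2" using y1 by (auto simp: power2_eq_iff)
    have m1: "\<i> * complex_of_real a1 * (complex_of_real q + c) - complex_of_real b1 = 0"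
      and cc: "c * (c - 1) = 0"
    proof -
      have "(\<i> * complex_of_real a1 * (complex_of_real q + c) - complex_of_real b1) * (complex_of_real (y1^2) - complex_of_real (y0^2)) = 0"
      proof -
        let ?M = "\<i> * complex_of_real a1 * (complex_of_real q + c) - complex_of_real b1"
        have "?M * (complex_of_real (y1^2) - complex_of_real (y0^2)) =
           (?M * complex_of_real (y1^2) + c * (c - 1)) - (?M * complex_of_real (y0^2) + c * (c - 1))"
          by (simp add: algebra_simps)
        also have "\<dots> = 0" using key[OF y1(2) y1(1)] key[OF y0] by simp
        finally show ?thesis .
      qed
      moreover have "complex_of_real (y1^2) - complex_of_real (y0^2) \<noteq> 0"
        using sq by (metis eq_iff_diff_eq_0 of_real_eq_iff)
      ultimately show m: "\<i> * complex_of_real a1 * (complex_of_real q + c) - complex_of_real b1 = 0" by simp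
      show "c * (c - 1) = 0" using key[OF y0] m by simp
    qed
    have m2: "\<i> * complex_of_real a2 * (complex_of_real q + c) - complex_of_real b2 = 0"
      using key2[OF y0] cc y0(1) by simp
    have c01: "c = 0 \<or> c = 1" using cc by simp
    have za: "a = 0" if "\<i> * complex_of_real a * (complex_of_real q + c) - complex_of_real b = 0" for a b
    proof -
      from c01 obtain r where r: "c = complex_of_real r" "r \<ge> 0" by auto
      have "Im (\<i> * complex_of_real a * (complex_of_real q + c) - complex_of_real b) = a * (q + r)"
        using r by simp
      then have "a * (q + r) = 0" using that by simp
      then show ?thesis using q r by simp
    qed
    show False using za[OF m1] za[OF m2] ne by simp
  qed
  have "complex_of_real (b1 - b2) * \<eta> y0 = 0" using sub[OF y0(1)] a by simp
  then have "b1 = b2" using y0 by simp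
  then show ?thesis using a by simp
qed

lemma stat_expr:
  fixes \<eta> :: "real \<Rightarrow> complex"
  assumes "p \<noteq> 1"
  shows "(complex_of_real \<kappa> + \<i> * complex_of_real (h * sigma_c p)) * \<eta> z
         - \<i> * complex_of_real h * (\<eta> z / 2 + complex_of_real z * vector_derivative \<eta> (at z))
         - vector_derivative (\<lambda>y. vector_derivative \<eta> (at y)) (at z)
       = - ode_expr \<eta> h \<kappa> (1 / (p - 1)) z"
  unfolding ode_expr_def sigma_c_def using assms
  by (simp add: algebra_simps of_real_diff of_real_divide divide_simps)

lemma cmod_scale:
  assumes L: "L > 0" and q: "q * (p - 1) = 1"
  shows "cmod (complex_of_real (L powr q) * exp (\<i> * complex_of_real \<tau>) * e0) powr (p - 1)
       = L * cmod e0 powr (p - 1)"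
proof -
  have n: "cmod (exp (\<i> * complex_of_real \<tau>)) = 1" by (simp add: norm_exp)
  have "cmod (complex_of_real (L powr q) * exp (\<i> * complex_of_real \<tau>) * e0) = L powr q * cmod e0"
    using L by (simp add: norm_mult n)
  then have "cmod (complex_of_real (L powr q) * exp (\<i> * complex_of_real \<tau>) * e0) powr (p - 1)
       = (L powr q) powr (p - 1) * cmod e0 powr (p - 1)"
    using L by (simp add: powr_mult)
  also have "(L powr q) powr (p - 1) = L" using L q by (simp add: powr_powr)
  finally show ?thesis .
qed

lemma jump_equiv:
  fixes F G :: "real \<Rightarrow> complex"
  assumes c: "c = complex_of_real (L powr q) * exp (\<i> * complex_of_real \<tau>)" and L: "L > 0"
    and q: "q * (p - 1) = 1"
    and R: "\<And>r. (F \<longlongrightarrow> r) (at_right 0) \<longleftrightarrow> (G \<longlongrightarrow> r / (c * complex_of_real L)) (at_right 0)"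
    and Lf: "\<And>r. (F \<longlongrightarrow> r) (at_left 0) \<longleftrightarrow> (G \<longlongrightarrow> r / (c * complex_of_real L)) (at_left 0)"
  shows "(\<exists>l r. (F \<longlongrightarrow> r) (at_right 0) \<and> (F \<longlongrightarrow> l) (at_left 0) \<and>
            r - l = - (complex_of_real (cmod (c * e0) powr (p - 1)) * (c * e0)))
     \<longleftrightarrow> (\<exists>l r. (G \<longlongrightarrow> r) (at_right 0) \<and> (G \<longlongrightarrow> l) (at_left 0) \<and>
            r - l = - (complex_of_real (cmod e0 powr (p - 1)) * e0))"
proof -
  let ?k = "c * complex_of_real L"
  have k: "?k \<noteq> 0" using c L by simp
  have cm: "cmod (c * e0) powr (p - 1) = L * cmod e0 powr (p - 1)"
    unfolding c using cmod_scale[OF L q] by (simp add: mult.assoc)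
  show ?thesis
  proof
    assume "\<exists>l r. (F \<longlongrightarrow> r) (at_right 0) \<and> (F \<longlongrightarrow> l) (at_left 0) \<and>
            r - l = - (complex_of_real (cmod (c * e0) powr (p - 1)) * (c * e0))"
    then obtain l r where h: "(F \<longlongrightarrow> r) (at_right 0)" "(F \<longlongrightarrow> l) (at_left 0)"
      "r - l = - (complex_of_real (cmod (c * e0) powr (p - 1)) * (c * e0))" by blast
    have "r / ?k - l / ?k = (r - l) / ?k" by (simp add: diff_divide_distrib)
    also have "\<dots> = - (complex_of_real (cmod e0 powr (p - 1)) * e0)"
      unfolding h(3) cm using k by (simp add: field_simps)
    finally show "\<exists>l r. (G \<longlongrightarrow> r) (at_right 0) \<and> (G \<longlongrightarrow> l) (at_left 0) \<and>
            r - l = - (complex_of_real (cmod e0 powr (p - 1)) * e0)"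
      using h(1,2) R Lf by blast
  next
    assume "\<exists>l r. (G \<longlongrightarrow> r) (at_right 0) \<and> (G \<longlongrightarrow> l) (at_left 0) \<and>
            r - l = - (complex_of_real (cmod e0 powr (p - 1)) * e0)"
    then obtain l r where h: "(G \<longlongrightarrow> r) (at_right 0)" "(G \<longlongrightarrow> l) (at_left 0)"
      "r - l = - (complex_of_real (cmod e0 powr (p - 1)) * e0)" by blast
    have "(F \<longlongrightarrow> r * ?k) (at_right 0)" "(F \<longlongrightarrow> l * ?k) (at_left 0)"
      using h(1,2) R Lf k by simp_all
    moreover have "r * ?k - l * ?k = - (complex_of_real (cmod (c * e0) powr (p - 1)) * (c * e0))"
      unfolding left_diff_distrib[symmetric] h(3) cm by (simp add: algebra_simps)
    ultimately show "\<exists>l r. (F \<longlongrightarrow> r) (at_right 0) \<and> (F \<longlongrightarrow> l) (at_left 0) \<and>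
            r - l = - (complex_of_real (cmod (c * e0) powr (p - 1)) * (c * e0))" by blast
  qed
qed

lemma lam_solve:
  fixes lam :: "real \<Rightarrow> real"
  assumes T: "T > 0" and pos: "\<And>t. t \<in> {0..<T} \<Longrightarrow> lam t > 0"
    and der: "\<And>t. t \<in> {0..<T} \<Longrightarrow> (lam has_real_derivative (h * lam t ^ 3)) (at t within {0..<T})"
    and lim: "filterlim lam at_top (at_left T)"
  shows "h > 0 \<and> (\<forall>t \<in> {0..<T}. lam t = 1 / sqrt (2 * h * (T - t)))"
proof -
  define g where "g t = 1 / (lam t)^2 + 2 * h * t" for t
  have "(g has_real_derivative 0) (at t within {0..<T})" if t: "t \<in> {0..<T}" for t
  proof -
    have "(g has_real_derivative (- (2 * lam t * (h * lam t ^ 3)) / ((lam t)^2)^2 + 2 * h)) (at t within {0..<T})"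
      unfolding g_def using der[OF t] pos[OF t]
      by (auto intro!: derivative_eq_intros simp: power2_eq_square)
    moreover have "- (2 * lam t * (h * lam t ^ 3)) / ((lam t)^2)^2 + 2 * h = 0"
      using pos[OF t] by (simp add: field_simps power2_eq_square power3_eq_cube power4_eq_xxxx)
    ultimately show ?thesis by simp
  qed
  then obtain C where C: "\<And>t. t \<in> {0..<T} \<Longrightarrow> g t = C"
    using has_field_derivative_zero_constant[of "{0..<T}" g] by (auto simp: convex_real_interval)
  have l1: "((\<lambda>t. 1 / (lam t)^2) \<longlongrightarrow> 0) (at_left T)"
  proof -
    have "((\<lambda>t. inverse (lam t)) \<longlongrightarrow> 0) (at_left T)"
      by (rule tendsto_inverse_0_at_top[OF lim])
    then have "((\<lambda>t. (inverse (lam t))^2) \<longlongrightarrow> 0^2) (at_left T)" by (intro tendsto_intros)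
    then show ?thesis by (simp add: power_inverse divide_inverse)
  qed
  have ev: "eventually (\<lambda>t. 1 / (lam t)^2 = C - 2 * h * t) (at_left T)"
  proof -
    have "eventually (\<lambda>t. t \<in> {0..<T}) (at_left T)"
      using T by (auto simp: eventually_at_left_field intro!: exI[of _ 0])
    then show ?thesis by eventually_elim (use C g_def in \<open>auto simp: algebra_simps\<close>)
  qed
  have l2: "((\<lambda>t. C - 2 * h * t) \<longlongrightarrow> C - 2 * h * T) (at_left T)"
    by (intro tendsto_intros)
  have "C - 2 * h * T = 0"
    using tendsto_unique[OF _ l2 Lim_transform_eventually[OF l1 ev]] by simp
  then have inv: "1 / (lam t)^2 = 2 * h * (T - t)" if "t \<in> {0..<T}" for t
    using C[OF that] g_def by (simp add: algebra_simps)
  have "2 * h * (T - 0) > 0" using inv[of 0] pos[of 0] T by (metis atLeastLessThan_iff order_refl zero_less_divide_1_iff zero_less_power)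
  then have hpos: "h > 0" using T by (simp add: zero_less_mult_iff)
  have "lam t = 1 / sqrt (2 * h * (T - t))" if t: "t \<in> {0..<T}" for t
  proof -
    have "sqrt (2 * h * (T - t)) = sqrt ((1 / lam t)^2)" using inv[OF t] by (simp add: power_divide)
    also have "\<dots> = 1 / lam t" using pos[OF t] by simp
    finally show ?thesis by simp
  qed
  then show ?thesis using hpos by blast
qed

lemma tau_solve:
  fixes tau :: "real \<Rightarrow> real"
  assumes T: "T > 0" and h: "h > 0"
    and der: "\<And>t. t \<in> {0..<T} \<Longrightarrow> (tau has_real_derivative (\<kappa> / (2 * h * (T - t)))) (at t within {0..<T})"
  shows "\<forall>t \<in> {0..<T}. tau t = \<kappa> / (2 * h) * ln (T / (T - t)) + tau 0"
proof -
  define F where "F t = tau t - \<kappa> / (2 * h) * ln (T / (T - t))" for t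
  have "(F has_real_derivative 0) (at t within {0..<T})" if t: "t \<in> {0..<T}" for t
  proof -
    show ?thesis
    proof -
      have Tt: "T - t > 0" using t by simp
      have q1: "((\<lambda>s. T / (T - s)) has_real_derivative T / (T - t)^2) (at t within {0..<T})"
        using Tt by (auto intro!: derivative_eq_intros simp: power2_eq_square)
      have q2: "((\<lambda>s. ln (T / (T - s))) has_real_derivative inverse (T / (T - t)) * (T / (T - t)^2)) (at t within {0..<T})"
        by (rule DERIV_chain2[OF DERIV_ln q1]) (use Tt T in simp)
      have q3: "inverse (T / (T - t)) * (T / (T - t)^2) = 1 / (T - t)"
      proof -
        have "inverse (T / (T - t)) * (T / (T - t)^2) = ((T - t) * T) / (T * ((T - t) * (T - t)))"
          by (simp add: power2_eq_square)
        also have "\<dots> = 1 / (T - t)" using Tt T by (simp add: divide_simps)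
        finally show ?thesis .
      qed
      have dF: "(F has_real_derivative (\<kappa> / (2 * h * (T - t)) - \<kappa> / (2 * h) * (1 / (T - t)))) (at t within {0..<T})"
        unfolding F_def by (intro DERIV_diff der[OF t] DERIV_cmult q2[unfolded q3])
      have "\<kappa> / (2 * h) * (1 / (T - t)) = \<kappa> / (2 * h * (T - t))"
        by (simp add: divide_divide_eq_left)
      then have e0: "\<kappa> / (2 * h * (T - t)) - \<kappa> / (2 * h) * (1 / (T - t)) = 0" by linarith
      show ?thesis using dF[unfolded e0] .
    qed
  qed
  then obtain C where C: "\<And>t. t \<in> {0..<T} \<Longrightarrow> F t = C"
    using has_field_derivative_zero_constant[of "{0..<T}" F] by (auto simp: convex_real_interval)
  have "F 0 = tau 0" using T by (simp add: F_def)
  have z: "0 \<in> {0..<T}" using T by simp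
  have "F t = tau 0" if "t \<in> {0..<T}" for t using C[OF that] C[OF z] \<open>F 0 = tau 0\<close> by simp
  then show ?thesis unfolding F_def by (metis (no_types, lifting) add.commute diff_eq_eq)
qed

lemma lam_formula_deriv:
  fixes h T t :: real
  assumes h: "h > 0" and t: "t < T"
  shows "((\<lambda>s. 1 / sqrt (2 * h * (T - s))) has_real_derivative h * (1 / sqrt (2 * h * (T - t)))^3) (at t)"
proof -
  have u: "2 * h * (T - t) > 0" using h t by simp
  define r where "r = sqrt (2 * h * (T - t))"
  have r: "r > 0" "r^2 = 2 * h * (T - t)" using u by (auto simp: r_def)
  have eq: "inverse r / (2 * T - 2 * t) = h * (1 / r)^3"
  proof -
    have "h * (1 / r)^3 = h / (r * r^2)" by (simp add: power3_eq_cube power2_eq_square field_simps)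
    also have "\<dots> = inverse r / (2 * T - 2 * t)" unfolding r(2) using r(1) h t
      by (simp add: field_simps)
    finally show ?thesis by simp
  qed
  show ?thesis
    using u eq unfolding r_def[symmetric]
    by (auto intro!: derivative_eq_intros simp: r_def)
qed

lemma tau_formula_deriv:
  fixes h T t :: real
  assumes h: "h > 0" and t: "t < T" and T: "T > 0"
  shows "((\<lambda>s. \<kappa> / (2 * h) * ln (T / (T - s)) + c0) has_real_derivative \<kappa> * (1 / sqrt (2 * h * (T - t)))^2) (at t)"
proof -
  have Tt: "T - t > 0" using t by simp
  have q1: "((\<lambda>s. T / (T - s)) has_real_derivative T / (T - t)^2) (at t)"
    using Tt by (auto intro!: derivative_eq_intros simp: power2_eq_square)
  have q2: "((\<lambda>s. ln (T / (T - s))) has_real_derivative inverse (T / (T - t)) * (T / (T - t)^2)) (at t)"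
    by (rule DERIV_chain2[OF DERIV_ln q1]) (use Tt T in simp)
  have q3: "inverse (T / (T - t)) * (T / (T - t)^2) = 1 / (T - t)"
  proof -
    have "inverse (T / (T - t)) * (T / (T - t)^2) = ((T - t) * T) / (T * ((T - t) * (T - t)))"
      by (simp add: power2_eq_square)
    also have "\<dots> = 1 / (T - t)" using Tt T by (simp add: divide_simps)
    finally show ?thesis .
  qed
  have d: "((\<lambda>s. \<kappa> / (2 * h) * ln (T / (T - s)) + c0) has_real_derivative \<kappa> / (2 * h) * (1 / (T - t)) + 0) (at t)"
    by (intro DERIV_add DERIV_cmult q2[unfolded q3] DERIV_const)
  have "(1 / sqrt (2 * h * (T - t)))^2 = 1 / (2 * h * (T - t))"
    using h Tt by (simp add: power_divide)
  moreover have "\<kappa> / (2 * h) * (1 / (T - t)) + 0 = \<kappa> * (1 / (2 * h * (T - t)))" by simp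
  ultimately show ?thesis using d by metis
qed

lemma lam_formula_lim:
  fixes h T :: real
  assumes h: "h > 0"
  shows "filterlim (\<lambda>s. 1 / sqrt (2 * h * (T - s))) at_top (at_left T)"
proof -
  have "filterlim (\<lambda>s. sqrt (2 * h * (T - s))) (at_right 0) (at_left T)"
  proof (subst filterlim_at, intro conjI)
    show "\<forall>\<^sub>F x in at_left T. sqrt (2 * h * (T - x)) \<in> {0<..} \<and> sqrt (2 * h * (T - x)) \<noteq> 0"
      using h by (auto simp: eventually_at_left_field intro!: exI[of _ "T - 1"])
    have "((\<lambda>s. sqrt (2 * h * (T - s))) \<longlongrightarrow> sqrt (2 * h * (T - T))) (at_left T)"
      by (intro tendsto_intros)
    then show "((\<lambda>s. sqrt (2 * h * (T - s))) \<longlongrightarrow> 0) (at_left T)" by simp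
  qed
  from filterlim_compose[OF filterlim_inverse_at_top_right this]
  show ?thesis by (simp add: divide_inverse)
qed

lemma main_aux:
  fixes p T :: real and lam tau :: "real \<Rightarrow> real" and eta :: "real \<Rightarrow> complex"
    and \<psi> :: "real \<Rightarrow> real \<Rightarrow> complex"
  assumes p: "p > 3" and T: "T > 0"
    and lpos: "\<forall>t \<in> {0..<T}. lam t > 0"
    and ldiff: "\<forall>t \<in> {0..<T}. lam differentiable (at t within {0..<T})"
    and tdiff: "\<forall>t \<in> {0..<T}. tau differentiable (at t within {0..<T})"
    and ne: "eta \<noteq> (\<lambda>_. 0)"
    and psi: "\<And>x t. \<psi> x t = complex_of_real (lam t powr (1 / (p - 1))) * exp (\<i> * complex_of_real (tau t))
                     * eta (lam t * x)"
  shows "(solves_dNLS p T \<psi> \<and> filterlim lam at_top (at_left T))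
     \<longleftrightarrow> (\<exists>h > 0. \<exists>\<kappa>::real.
            (\<forall>t \<in> {0..<T}. lam t = 1 / sqrt (2 * h * (T - t)) \<and>
                            tau t = \<kappa> / (2 * h) * ln (T / (T - t)) + tau 0)
            \<and> solves_stationary p \<kappa> h eta)"
proof -
  define q where "q = 1 / (p - 1)"
  have q: "q > 0" "q * (p - 1) = 1" "p \<noteq> 1" using p by (auto simp: q_def)
  define S where "S = {0..<T}"
  have zS: "0 \<in> S" using T by (simp add: S_def)
  define A where "A t = complex_of_real (lam t powr q) * exp (\<i> * complex_of_real (tau t))" for t
  have Lp: "lam t > 0" if "t \<in> S" for t using lpos that by (simp add: S_def)
  have A0: "A t \<noteq> 0" if "t \<in> S" for t using Lp[OF that] by (simp add: A_def)
  have psiA: "\<psi> y t = A t * eta (lam t * y)" for y t by (simp add: psi A_def q_def)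
  have S_iff: "t \<in> S \<longleftrightarrow> 0 \<le> t \<and> t < T" for t by (simp add: S_def)
  have psiq: "\<And>x s. \<psi> x s = complex_of_real (lam s powr q) * exp (\<i> * complex_of_real (tau s)) * eta (lam s * x)"
    by (simp add: psi q_def)
  have "\<forall>t\<in>S. \<exists>D. (lam has_real_derivative D) (at t within S)"
    using ldiff unfolding S_def real_differentiable_def by blast
  then obtain lp where dl: "\<And>t. t \<in> S \<Longrightarrow> (lam has_real_derivative lp t) (at t within S)" by metis
  have "\<forall>t\<in>S. \<exists>D. (tau has_real_derivative D) (at t within S)"
    using tdiff unfolding S_def real_differentiable_def by blast
  then obtain tp where dtau: "\<And>t. t \<in> S \<Longrightarrow> (tau has_real_derivative tp t) (at t within S)" by metis
  have psi00: "\<psi> 0 t = A t * eta 0" for t by (simp add: psiA)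
  show ?thesis
  proof
    assume asm: "solves_dNLS p T \<psi> \<and> filterlim lam at_top (at_left T)"
    then have lim: "filterlim lam at_top (at_left T)" by blast
    have dN1: "(\<lambda>y. \<psi> y t) differentiable (at x) \<and> (\<lambda>y. dx \<psi> t y) differentiable (at x) \<and>
          (\<lambda>s. \<psi> x s) differentiable (at t within {0..<T}) \<and>
          \<i> * dt T \<psi> x t + dxx \<psi> t x = 0" if "t \<in> S" "x \<noteq> 0" for t x
      using asm that unfolding solves_dNLS_def S_def by blast
    have dN2: "((\<lambda>y. \<psi> y t) \<longlongrightarrow> \<psi> 0 t) (at 0)" if "t \<in> S" for t
      using asm that unfolding solves_dNLS_def S_def by blast
    have dN3: "\<exists>l r. ((\<lambda>y. dx \<psi> t y) \<longlongrightarrow> r) (at_right 0) \<and>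
              ((\<lambda>y. dx \<psi> t y) \<longlongrightarrow> l) (at_left 0) \<and>
              r - l = - (complex_of_real (cmod (\<psi> 0 t) powr (p - 1)) * \<psi> 0 t)" if "t \<in> S" for t
      using asm that unfolding solves_dNLS_def S_def by blast
    have D: "eta differentiable (at z)" if z: "z \<noteq> 0" for z
    proof -
      have x: "z / lam 0 \<noteq> 0" using z Lp[OF zS] by simp
      have "eta differentiable (at (lam 0 * (z / lam 0)))"
        by (rule spatial_D[where \<psi>=\<psi> and t=0, OF psiA A0[OF zS] Lp[OF zS]]) (use dN1[OF zS x] in blast)
      then show ?thesis using Lp[OF zS] by simp
    qed
    have D2: "(\<lambda>z. vector_derivative eta (at z)) differentiable (at z)" if z: "z \<noteq> 0" for z
    proof -
      have x: "z / lam 0 \<noteq> 0" using z Lp[OF zS] by simp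
      have "(\<lambda>z. vector_derivative eta (at z)) differentiable (at (lam 0 * (z / lam 0)))"
        using spatial(3)[where \<psi>=\<psi> and t=0, OF psiA A0[OF zS] Lp[OF zS] D x] dN1[OF zS x] by blast
      then show ?thesis using Lp[OF zS] by simp
    qed
    have E: "ode_expr eta (lp t / lam t ^ 3) (tp t / (lam t)\<^sup>2) q y = 0" if t: "t \<in> S" and y: "y \<noteq> 0" for t y
    proof -
      have x: "y / lam t \<noteq> 0" using y Lp[OF t] by simp
      have Lx: "lam t * (y / lam t) = y" using Lp[OF t] by simp
      have t': "0 \<le> t" "t < T" using t by (auto simp: S_def)
      have eq: "\<i> * dt T \<psi> (y / lam t) t + dxx \<psi> t (y / lam t) =
        (complex_of_real (lam t powr q) * exp (\<i> * complex_of_real (tau t)) * complex_of_real ((lam t)\<^sup>2))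
        * ode_expr eta (lp t / lam t ^ 3) (tp t / (lam t)\<^sup>2) q (lam t * (y / lam t))"
        by (rule pde_point(2)[OF psiq t' Lp[OF t] dl[OF t, unfolded S_def] dtau[OF t, unfolded S_def] x D])
           (use D2[OF y] in \<open>simp_all only: Lx not_False_eq_True\<close>)
      moreover have "complex_of_real (lam t powr q) * exp (\<i> * complex_of_real (tau t)) * complex_of_real ((lam t)\<^sup>2) \<noteq> 0"
        using Lp[OF t] by simp
      ultimately show ?thesis using dN1[OF t x] Lx by simp
    qed
    obtain y0 where y0: "y0 \<noteq> 0" "eta y0 \<noteq> 0"
    proof -
      obtain y where y: "eta y \<noteq> 0" using ne by (auto simp: fun_eq_iff)
      show ?thesis
      proof (cases "y = 0")
        case False then show ?thesis using that y by blast
      next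
        case True
        have c: "(eta \<longlongrightarrow> eta 0) (at 0)"
          using spatial(7)[where \<psi>=\<psi> and t=0, OF psiA A0[OF zS] Lp[OF zS] D] dN2[OF zS] by blast
        have "eventually (\<lambda>z. eta z \<noteq> 0) (at 0)" using tendsto_imp_eventually_ne[OF c] y True by simp
        moreover have "eventually (\<lambda>z. z \<noteq> (0::real)) (at 0)" by (simp add: eventually_at_filter)
        ultimately have "eventually (\<lambda>z. eta z \<noteq> 0 \<and> z \<noteq> 0) (at (0::real))" by eventually_elim auto
        then obtain z where "eta z \<noteq> 0" "z \<noteq> 0" using eventually_happens[of _ "at (0::real)"] by auto
        then show ?thesis using that by blast
      qed
    qed
    define h where "h = lp 0 / lam 0 ^ 3"
    define \<kappa> where "\<kappa> = tp 0 / (lam 0)\<^sup>2"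
    have hk: "lp t / lam t ^ 3 = h \<and> tp t / (lam t)\<^sup>2 = \<kappa>" if t: "t \<in> S" for t
      unfolding h_def \<kappa>_def
      by (rule ode_unique[OF q(1) E[OF t] E[OF zS] D D2 y0])
    have lpe: "lp t = h * lam t ^ 3" if t: "t \<in> S" for t
      using hk[OF t] Lp[OF t] by (simp add: divide_eq_eq)
    have tpe: "tp t = \<kappa> * (lam t)\<^sup>2" if t: "t \<in> S" for t
      using hk[OF t] Lp[OF t] by (simp add: divide_eq_eq)
    have ls: "h > 0 \<and> (\<forall>t \<in> {0..<T}. lam t = 1 / sqrt (2 * h * (T - t)))"
      by (rule lam_solve[OF T]) (use Lp dl lpe lim in \<open>auto simp: S_def\<close>)
    then have hpos: "h > 0" and lamf: "\<And>t. t \<in> S \<Longrightarrow> lam t = 1 / sqrt (2 * h * (T - t))"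
      by (auto simp: S_def)
    have tauf: "\<forall>t \<in> {0..<T}. tau t = \<kappa> / (2 * h) * ln (T / (T - t)) + tau 0"
    proof (rule tau_solve[OF T hpos])
      fix t assume t: "t \<in> {0..<T}"
      then have tS: "t \<in> S" by (simp add: S_def)
      have u: "2 * h * (T - t) > 0" using hpos t by simp
      have "(lam t)\<^sup>2 = 1 / (2 * h * (T - t))" using lamf[OF tS] u by (simp add: power_divide)
      then have "tp t = \<kappa> / (2 * h * (T - t))" using tpe[OF tS] by simp
      then show "(tau has_real_derivative \<kappa> / (2 * h * (T - t))) (at t within {0..<T})"
        using dtau[OF tS] by (simp add: S_def)
    qed
    have stat: "solves_stationary p \<kappa> h eta"
      unfolding solves_stationary_def
    proof (intro conjI allI impI)
      fix z :: real assume z: "z \<noteq> 0"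
      show "eta differentiable (at z)" using D[OF z] .
      show "(\<lambda>y. vector_derivative eta (at y)) differentiable (at z)" using D2[OF z] .
      show "(complex_of_real \<kappa> + \<i> * complex_of_real (h * sigma_c p)) * eta z
         - \<i> * complex_of_real h * (eta z / 2 + complex_of_real z * vector_derivative eta (at z))
         - vector_derivative (\<lambda>y. vector_derivative eta (at y)) (at z) = 0"
        unfolding stat_expr[OF q(3)] using E[OF zS z] hk[OF zS] by (simp add: q_def)
    next
      show "(eta \<longlongrightarrow> eta 0) (at 0)"
        using spatial(7)[where \<psi>=\<psi> and t=0, OF psiA A0[OF zS] Lp[OF zS] D] dN2[OF zS] by blast
    next
      show "\<exists>l r. ((\<lambda>y. vector_derivative eta (at y)) \<longlongrightarrow> r) (at_right 0) \<and>
           ((\<lambda>y. vector_derivative eta (at y)) \<longlongrightarrow> l) (at_left 0) \<and>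
           r - l = - (complex_of_real (cmod (eta 0) powr (p - 1)) * eta 0)"
        using jump_equiv[OF A_def Lp[OF zS] q(2) spatial(5)[where \<psi>=\<psi> and t=0, OF psiA A0[OF zS] Lp[OF zS] D]
            spatial(6)[where \<psi>=\<psi> and t=0, OF psiA A0[OF zS] Lp[OF zS] D], of "eta 0"]
          dN3[OF zS] unfolding psi00 by blast
    qed
    show "\<exists>h > 0. \<exists>\<kappa>::real.
            (\<forall>t \<in> {0..<T}. lam t = 1 / sqrt (2 * h * (T - t)) \<and>
                            tau t = \<kappa> / (2 * h) * ln (T / (T - t)) + tau 0)
            \<and> solves_stationary p \<kappa> h eta"
      using hpos ls tauf stat by blast
  next
    assume "\<exists>h > 0. \<exists>\<kappa>::real.
            (\<forall>t \<in> {0..<T}. lam t = 1 / sqrt (2 * h * (T - t)) \<and>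
                            tau t = \<kappa> / (2 * h) * ln (T / (T - t)) + tau 0)
            \<and> solves_stationary p \<kappa> h eta"
    then obtain h \<kappa> where hpos: "h > 0"
      and form: "\<And>t. t \<in> S \<Longrightarrow> lam t = 1 / sqrt (2 * h * (T - t)) \<and>
                            tau t = \<kappa> / (2 * h) * ln (T / (T - t)) + tau 0"
      and stat: "solves_stationary p \<kappa> h eta"
      unfolding S_def by blast
    have D: "eta differentiable (at z)" if "z \<noteq> 0" for z using stat that unfolding solves_stationary_def by blast
    have D2: "(\<lambda>z. vector_derivative eta (at z)) differentiable (at z)" if "z \<noteq> 0" for z
      using stat that unfolding solves_stationary_def by blast
    have E: "ode_expr eta h \<kappa> q z = 0" if "z \<noteq> 0" for z
    proof -
      have "(complex_of_real \<kappa> + \<i> * complex_of_real (h * sigma_c p)) * eta z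
         - \<i> * complex_of_real h * (eta z / 2 + complex_of_real z * vector_derivative eta (at z))
         - vector_derivative (\<lambda>y. vector_derivative eta (at y)) (at z) = 0"
        using stat that unfolding solves_stationary_def by blast
      then show ?thesis unfolding stat_expr[OF q(3)] by (simp add: q_def)
    qed
    have econt: "(eta \<longlongrightarrow> eta 0) (at 0)" using stat unfolding solves_stationary_def by blast
    have ejump: "\<exists>l r. ((\<lambda>y. vector_derivative eta (at y)) \<longlongrightarrow> r) (at_right 0) \<and>
           ((\<lambda>y. vector_derivative eta (at y)) \<longlongrightarrow> l) (at_left 0) \<and>
           r - l = - (complex_of_real (cmod (eta 0) powr (p - 1)) * eta 0)"
      using stat unfolding solves_stationary_def by blast
    have dl': "(lam has_real_derivative h * lam t ^ 3) (at t within S)" if t: "t \<in> S" for t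
    proof -
      have tT: "t < T" using t by (simp add: S_def)
      have "((\<lambda>s. 1 / sqrt (2 * h * (T - s))) has_real_derivative h * (1 / sqrt (2 * h * (T - t)))^3) (at t within S)"
        using lam_formula_deriv[OF hpos tT] by (rule has_field_derivative_at_within)
      then have "(lam has_real_derivative h * (1 / sqrt (2 * h * (T - t)))^3) (at t within S)"
        by (rule has_field_derivative_transform_within[OF _ zero_less_one t]) (use form in simp)
      then show ?thesis using form[OF t] by simp
    qed
    have dt': "(tau has_real_derivative \<kappa> * (lam t)\<^sup>2) (at t within S)" if t: "t \<in> S" for t
    proof -
      have tT: "t < T" using t by (simp add: S_def)
      have "((\<lambda>s. \<kappa> / (2 * h) * ln (T / (T - s)) + tau 0) has_real_derivative \<kappa> * (1 / sqrt (2 * h * (T - t)))^2) (at t within S)"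
        using tau_formula_deriv[OF hpos tT T] by (rule has_field_derivative_at_within)
      then have "(tau has_real_derivative \<kappa> * (1 / sqrt (2 * h * (T - t)))^2) (at t within S)"
        by (rule has_field_derivative_transform_within[OF _ zero_less_one t]) (use form in simp)
      then show ?thesis using form[OF t] by simp
    qed
    have dNLS: "solves_dNLS p T \<psi>"
      unfolding solves_dNLS_def
    proof (intro ballI conjI allI impI)
      fix t assume tS0: "t \<in> {0..<T}"
      then have t: "t \<in> S" by (simp add: S_def)
      have t': "0 \<le> t" "t < T" using t by (auto simp: S_def)
      fix x :: real assume x: "x \<noteq> 0"
      have Lx: "lam t * x \<noteq> 0" using x Lp[OF t] by simp
      show "(\<lambda>y. \<psi> y t) differentiable (at x)"
        using spatial(1)[where \<psi>=\<psi> and t=t, OF psiA A0[OF t] Lp[OF t] D] D[OF Lx] by blast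
      show "(\<lambda>y. dx \<psi> t y) differentiable (at x)"
        using spatial(3)[where \<psi>=\<psi> and t=t, OF psiA A0[OF t] Lp[OF t] D x] D2[OF Lx] by blast
      show "(\<lambda>s. \<psi> x s) differentiable (at t within {0..<T})"
        by (rule pde_point(1)[OF psiq t' Lp[OF t] dl'[OF t, unfolded S_def] dt'[OF t, unfolded S_def] x D D2[OF Lx]])
      have "\<i> * dt T \<psi> x t + dxx \<psi> t x =
        (complex_of_real (lam t powr q) * exp (\<i> * complex_of_real (tau t)) * complex_of_real ((lam t)\<^sup>2))
        * ode_expr eta (h * lam t ^ 3 / lam t ^ 3) (\<kappa> * (lam t)\<^sup>2 / (lam t)\<^sup>2) q (lam t * x)"
        by (rule pde_point(2)[OF psiq t' Lp[OF t] dl'[OF t, unfolded S_def] dt'[OF t, unfolded S_def] x D D2[OF Lx]])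
      also have "\<dots> = 0" using E[OF Lx] Lp[OF t] by simp
      finally show "\<i> * dt T \<psi> x t + dxx \<psi> t x = 0" .
    next
      fix t assume tS0: "t \<in> {0..<T}"
      then have t: "t \<in> S" by (simp add: S_def)
      show "((\<lambda>y. \<psi> y t) \<longlongrightarrow> \<psi> 0 t) (at 0)"
        using spatial(7)[where \<psi>=\<psi> and t=t, OF psiA A0[OF t] Lp[OF t] D] econt by blast
    next
      fix t assume tS0: "t \<in> {0..<T}"
      then have t: "t \<in> S" by (simp add: S_def)
      show "\<exists>l r. ((\<lambda>y. dx \<psi> t y) \<longlongrightarrow> r) (at_right 0) \<and>
              ((\<lambda>y. dx \<psi> t y) \<longlongrightarrow> l) (at_left 0) \<and>
              r - l = - (complex_of_real (cmod (\<psi> 0 t) powr (p - 1)) * \<psi> 0 t)"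
        using jump_equiv[OF A_def Lp[OF t] q(2) spatial(5)[where \<psi>=\<psi> and t=t, OF psiA A0[OF t] Lp[OF t] D]
            spatial(6)[where \<psi>=\<psi> and t=t, OF psiA A0[OF t] Lp[OF t] D], of "eta 0"]
          ejump unfolding psi00 by blast
    qed
    have "filterlim lam at_top (at_left T)"
    proof -
      have "eventually (\<lambda>s. 1 / sqrt (2 * h * (T - s)) = lam s) (at_left T)"
      proof -
        have "eventually (\<lambda>s. s \<in> S) (at_left T)"
          using T by (auto simp: S_def eventually_at_left_field intro!: exI[of _ 0])
        then show ?thesis by eventually_elim (use form in simp)
      qed
      then show ?thesis using lam_formula_lim[OF hpos, of T] filterlim_cong by fastforce
    qed
    then show "solves_dNLS p T \<psi> \<and> filterlim lam at_top (at_left T)" using dNLS by blast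
  qed
qed


theorem theorem1p1:
  fixes p T :: real and lam tau :: "real \<Rightarrow> real" and eta :: "real \<Rightarrow> complex"
  assumes "p > 3" and "T > 0"
    and "\<forall>t \<in> {0..<T}. lam t > 0"
    and "\<forall>t \<in> {0..<T}. lam differentiable (at t within {0..<T})"
    and "\<forall>t \<in> {0..<T}. tau differentiable (at t within {0..<T})"
    and "eta \<noteq> (\<lambda>_. 0)"
  shows "(solves_dNLS p T
            (\<lambda>x t. complex_of_real (lam t powr (1 / (p - 1))) * exp (\<i> * complex_of_real (tau t))
                     * eta (lam t * x))
          \<and> filterlim lam at_top (at_left T))
     \<longleftrightarrow> (\<exists>h > 0. \<exists>\<kappa>::real.
            (\<forall>t \<in> {0..<T}. lam t = 1 / sqrt (2 * h * (T - t)) \<and>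
                            tau t = \<kappa> / (2 * h) * ln (T / (T - t)) + tau 0)
            \<and> solves_stationary p \<kappa> h eta)"
  by (rule main_aux[OF assms]) simp

end
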